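(* Suppose $\lambda+3\lambda C<1$ and there is a constant $M>0$ such that $a_i\le CM$ for all $i\ge1$. Then for every $k\ge 1$, $$\sum_{m=1}^k E_m^k\le M\,\frac{1-\lambda-2\lambda C}{1-\lambda-3\lambda C}.$$
   Context: Let $C>0$ and $0<\lambda<1$ be constants and let $(a_k)_{k\ge 1}$ be a sequence of nonnegative real numbers. Define the doubly indexed array $(E_m^k)_{m\ge 1,\,k\ge 0}$ by $E_m^0=0$ for all $m\ge1$ and, for $k\ge 1$, $$E_1^k=\lambda\big(E_1^{k-1}+2C\,E_1^{k-1}+a_k\big),\qquad E_m^k=\lambda\big(E_m^{k-1}+C\,(E_m^{k-1}+E_{m-1}^{k-1})\big)\ \ (m\ge 2).$$ (Consequently $E_m^k=0$ whenever $m>k$, and $E_1^1=\lambda a_1$.) In the paper, $C$ is the constant of the evolution requirement of the numerical scheme, $\lambda$ the constant of the mesh $\lambda$-rule, and $E_m^k$ the bound on the $m$-th oscillation extreme after $k$ steps. *)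

theory Defs
  imports Complex_Main
begin

text \<open>The array E m k (m >= 1, k >= 0). Index m = 0 is unused (set to 0).
  E m 0 = 0; E 1 (k+1) = lambda (E 1 k + 2 C E 1 k + a (k+1));
  E m (k+1) = lambda (E m k + C (E m k + E (m-1) k)) for m >= 2.\<close>
fun E :: "real \<Rightarrow> real \<Rightarrow> (nat \<Rightarrow> real) \<Rightarrow> nat \<Rightarrow> nat \<Rightarrow> real" where
  "E C lam a 0 k = 0"
| "E C lam a (Suc m) 0 = 0"
| "E C lam a (Suc 0) (Suc k) =
     lam * (E C lam a (Suc 0) k + 2 * C * E C lam a (Suc 0) k + a (Suc k))"
| "E C lam a (Suc (Suc m)) (Suc k) =
     lam * (E C lam a (Suc (Suc m)) k + C * (E C lam a (Suc (Suc m)) k + E C lam a (Suc m) k))"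

end

theory Submission
  imports Defs
begin

lemma E_nonneg:
  assumes "C > 0" "lam > 0" "\<And>i. i \<ge> 1 \<Longrightarrow> a i \<ge> 0"
  shows "E C lam a m k \<ge> 0"
proof (induction k arbitrary: m)
  case 0 then show ?case by (cases m) auto
next
  case (Suc k)
  show ?case
  proof (cases m)
    case 0 then show ?thesis by simp
  next
    case (Suc p)
    then show ?thesis
    proof (cases p)
      case 0
      have "a (Suc k) \<ge> 0" using assms(3) by simp
      then show ?thesis using Suc 0 Suc.IH[of 1] assms by (simp add: mult_nonneg_nonneg)
    next
      case (Suc q)
      then show ?thesis using \<open>m = Suc p\<close> Suc.IH[of "Suc (Suc q)"] Suc.IH[of "Suc q"] assms
        by (simp add: mult_nonneg_nonneg)
    qed
  qed
qed

lemma T_rec: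
  "(\<Sum>m<Suc n. E C lam a (Suc m) (Suc k)) =
    lam * ((1 + C) * (\<Sum>m<Suc n. E C lam a (Suc m) k) + C * E C lam a 1 k
           + C * (\<Sum>m<n. E C lam a (Suc m) k) + a (Suc k))"
proof (induction n)
  case 0 then show ?case by (simp add: algebra_simps)
next
  case (Suc n)
  have "(\<Sum>m<Suc (Suc n). E C lam a (Suc m) (Suc k)) =
        (\<Sum>m<Suc n. E C lam a (Suc m) (Suc k)) + E C lam a (Suc (Suc n)) (Suc k)" by simp
  also have "\<dots> = lam * ((1 + C) * (\<Sum>m<Suc n. E C lam a (Suc m) k) + C * E C lam a 1 k
           + C * (\<Sum>m<n. E C lam a (Suc m) k) + a (Suc k))
        + lam * ((1 + C) * E C lam a (Suc (Suc n)) k + C * E C lam a (Suc n) k)"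
    using Suc by (simp add: algebra_simps)
  also have "\<dots> = lam * ((1 + C) * (\<Sum>m<Suc (Suc n). E C lam a (Suc m) k) + C * E C lam a 1 k
           + C * (\<Sum>m<Suc n. E C lam a (Suc m) k) + a (Suc k))"
    by (simp add: algebra_simps)
  finally show ?case .
qed

theorem mainTheorem6:
  fixes C lam M :: real and a :: "nat \<Rightarrow> real" and k :: nat
  assumes "C > 0" and "0 < lam" and "lam < 1"
    and "\<And>i. i \<ge> 1 \<Longrightarrow> a i \<ge> 0"
    and "lam + 3 * lam * C < 1"
    and "M > 0"
    and "\<And>i. i \<ge> 1 \<Longrightarrow> a i \<le> C * M"
    and "k \<ge> 1"
  shows "(\<Sum>m=1..k. E C lam a m k) \<le> M * (1 - lam - 2 * lam * C) / (1 - lam - 3 * lam * C)"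
proof -
  define D where "D = 1 - lam - 3 * lam * C"
  have D: "D > 0" using assms(5) by (simp add: D_def)
  define x where "x = lam * C * M / D"
  have x0: "x \<ge> 0" using D assms by (simp add: x_def)
  have fx: "lam * ((1 + 3*C) * x + C * M) = x"
    using D by (simp add: x_def D_def field_simps)
  have nn: "\<And>m k. E C lam a m k \<ge> 0" using E_nonneg assms(1,2,4) by blast
  have main: "(\<Sum>m<n. E C lam a (Suc m) j) \<le> x" for n j
  proof (induction j arbitrary: n)
    case 0 then show ?case using x0 by simp
  next
    case (Suc j)
    show ?case
    proof (cases n)
      case 0 then show ?thesis using x0 by simp
    next
      case (Suc p)
      let ?S = "\<Sum>m<Suc p. E C lam a (Suc m) j"
      let ?S' = "\<Sum>m<p. E C lam a (Suc m) j"
      have "?S' \<le> ?S" using nn by (simp add: sum_nonneg)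
      have e1: "E C lam a 1 j \<le> ?S"
        using nn sum_nonneg[of "{..<p}" "\<lambda>m. E C lam a (Suc (Suc m)) j"]
        by (simp add: sum.lessThan_Suc_shift del: sum.lessThan_Suc)
      have S: "?S \<le> x" using Suc.IH .
      have aa: "a (Suc j) \<le> C * M" using assms(7) by simp
      have "(1 + C) * ?S + C * E C lam a 1 j + C * ?S' + a (Suc j) \<le> (1 + 3*C) * ?S + C * M"
      proof -
        have "C * E C lam a 1 j \<le> C * ?S" using e1 assms(1) by (simp add: mult_left_mono)
        moreover have "C * ?S' \<le> C * ?S" using \<open>?S' \<le> ?S\<close> assms(1) by (simp add: mult_left_mono)
        ultimately show ?thesis using aa by (simp add: algebra_simps)
      qed
      also have "\<dots> \<le> (1 + 3*C) * x + C * M" using S assms(1) by (simp add: mult_left_mono)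
      finally have "lam * ((1 + C) * ?S + C * E C lam a 1 j + C * ?S' + a (Suc j))
                    \<le> lam * ((1 + 3*C) * x + C * M)" using assms(2) by (simp add: mult_left_mono)
      then show ?thesis using fx Suc T_rec[where n=p and k=j and C=C and lam=lam and a=a] by (simp del: sum.lessThan_Suc)
    qed
  qed
  have "(\<Sum>m=1..k. E C lam a m k) = (\<Sum>m<k. E C lam a (Suc m) k)"
    using sum.shift_bounds_cl_Suc_ivl[of "\<lambda>m. E C lam a m k" 0 "k - 1"] assms(8)
    by (simp add: atLeast0AtMost lessThan_Suc_atMost[symmetric])
  also have "\<dots> \<le> x" by (rule main)
  also have "x \<le> M + x" using assms(6) by simp
  also have "M + x = M * (1 - lam - 2 * lam * C) / (1 - lam - 3 * lam * C)"
    using D by (simp add: x_def D_def field_simps)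
  finally show ?thesis .
qed

end
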